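(* There is an absolute constant $C>0$ such that for all $\eta_1,\eta_2,\varepsilon,\delta\in(0,1/2]$ with $\eta_2\le\eta_1$ there exists an algorithm (for the infinite-armed Bernoulli bandit described in the context, not knowing $\mu$) which uses at most $C\,\frac{\eta_1\log(1/\eta_2)\log(1/\delta)}{\eta_2^2\varepsilon^2}$ samples and outputs a number $\hat\alpha\in[0,1]$ such that for every reservoir distribution $\mu$, with probability at least $1-\frac{\delta}{2}$, \[ \hat\alpha\in\Big[G_\mu^{-1}(1-\eta_1)-\tfrac{\varepsilon}{3},\;G_\mu^{-1}(1-\eta_1+\eta_2)+\tfrac{\varepsilon}{3}\Big]. \]
   Context: Infinite-armed Bernoulli bandit: a reservoir distribution $\mu$ is any Borel probability measure on $[0,1]$. There are countably many arms $a_1,a_2,\dots$ whose means $p_1,p_2,\dots$ are drawn i.i.d. from $\mu$ (unknown to the algorithm). Each time arm $a_i$ is sampled it returns a reward in $\{0,1\}$ distributed as Bernoulli$(p_i)$, independently of all other rewards given the means. An algorithm adaptively chooses which arm to sample at each step based on past rewards (and possibly internal randomness). Probabilities are over the means, rewards and the algorithm's randomness. Write $G_\mu(\tau)=\mu([0,\tau])$ and $G_\mu^{-1}(p)=\inf\{\tau: G_\mu(\tau)\ge p\}$. *)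

theory Defs
  imports "HOL-Probability.Probability"
begin

text \<open>Arms are indexed by natural numbers (arm a_{i+1} has index i). A history is the list of
  (arm index, observed reward) pairs in the order they were obtained.\<close>
type_synonym history = "(nat \<times> bool) list"

text \<open>A (randomised, adaptive) algorithm: given the history so far it chooses, with
  internal randomness, either \<open>Inl i\<close> = sample arm i next, or \<open>Inr a\<close> = stop and output a.\<close>
type_synonym bandit_alg = "history \<Rightarrow> (nat + real) pmf"

text \<open>Distribution of the output of the algorithm when the arm means are \<open>p\<close>, running for at
  most \<open>n\<close> further steps from history \<open>h\<close> (fuel; on fuel exhaustion a sampling decision
  is replaced by output 0, which never happens for algorithms respecting the sample bound).\<close>
fun alg_output :: "bandit_alg \<Rightarrow> (nat \<Rightarrow> real) \<Rightarrow> nat \<Rightarrow> history \<Rightarrow> real pmf" where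
  "alg_output A p 0 h = map_pmf (\<lambda>x. case x of Inr a \<Rightarrow> a | Inl _ \<Rightarrow> 0) (A h)"
| "alg_output A p (Suc n) h = A h \<bind> (\<lambda>x. case x of
      Inr a \<Rightarrow> return_pmf a
    | Inl i \<Rightarrow> bernoulli_pmf (p i) \<bind> (\<lambda>r. alg_output A p n (h @ [(i, r)])))"

definition valid_alg :: "real \<Rightarrow> bandit_alg \<Rightarrow> bool" where
  "valid_alg B A \<longleftrightarrow>
     (\<forall>h i. Inl i \<in> set_pmf (A h) \<longrightarrow> real (length h) + 1 \<le> B) \<and>
     (\<forall>h a. Inr a \<in> set_pmf (A h) \<longrightarrow> a \<in> {0..1})"

definition reservoir :: "real measure \<Rightarrow> bool" where
  "reservoir \<mu> \<longleftrightarrow> prob_space \<mu> \<and> sets \<mu> = sets borel \<and> emeasure \<mu> {0..1} = 1"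

definition G :: "real measure \<Rightarrow> real \<Rightarrow> real" where
  "G \<mu> \<tau> = measure \<mu> {0..\<tau>}"

definition G_inv :: "real measure \<Rightarrow> real \<Rightarrow> real" where
  "G_inv \<mu> q = Inf {\<tau>. G \<mu> \<tau> \<ge> q}"

definition success_prob :: "real measure \<Rightarrow> bandit_alg \<Rightarrow> nat \<Rightarrow> real set \<Rightarrow> ennreal" where
  "success_prob \<mu> A n S =
     (\<integral>\<^sup>+ p. ennreal (measure_pmf.prob (alg_output A p n []) S) \<partial>(PiM UNIV (\<lambda>_. \<mu>)))"

end

theory Submission
  imports Defs
begin


lemma binom_exp_Suc:
  assumes q: "q \<in> {0..1}"
  shows "measure_pmf.expectation (binomial_pmf (Suc k) q) (h::nat\<Rightarrow>real) =
     q * measure_pmf.expectation (binomial_pmf k q) (\<lambda>s. h (Suc s)) + (1-q) * measure_pmf.expectation (binomial_pmf k q) h"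
proof -
  have "binomial_pmf (Suc k) q = bernoulli_pmf q \<bind> (\<lambda>b. map_pmf (\<lambda>s. (if b then 1 else 0) + s) (binomial_pmf k q))"
    using q by (simp add: binomial_pmf_Suc map_pmf_def)
  also have "measure_pmf.expectation \<dots> h = (\<Sum>b\<in>UNIV. pmf (bernoulli_pmf q) b *\<^sub>R measure_pmf.expectation (map_pmf (\<lambda>s. (if b then 1 else 0) + s) (binomial_pmf k q)) h)"
    by (rule pmf_expectation_bind) (use q in \<open>auto intro!: finite_imageI\<close>)
  also have "\<dots> = q * measure_pmf.expectation (binomial_pmf k q) (\<lambda>s. h (Suc s)) + (1-q) * measure_pmf.expectation (binomial_pmf k q) h"
    using q by (simp add: UNIV_bool)
  finally show ?thesis .
qed

lemma binom_E1: assumes q: "q \<in> {0..1}" shows "measure_pmf.expectation (binomial_pmf k q) (\<lambda>s. real s) = k * q"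
proof (induction k)
  case 0 then show ?case using q by (simp add: binomial_pmf_0)
next
  case (Suc k)
  have "measure_pmf.expectation (binomial_pmf k q) (\<lambda>s. real (Suc s)) = measure_pmf.expectation (binomial_pmf k q) (\<lambda>s. real s) + 1"
    using q by (simp add: Bochner_Integration.integral_add)
  then show ?case using Suc binom_exp_Suc[OF q, of k real] by (simp add: algebra_simps)
qed

lemma binom_E2: assumes q: "q \<in> {0..1}" shows "measure_pmf.expectation (binomial_pmf k q) (\<lambda>s. (real s)^2) = k * q * (1-q) + (k*q)^2"
proof (induction k)
  case 0 then show ?case using q by (simp add: binomial_pmf_0)
next
  case (Suc k)
  have "measure_pmf.expectation (binomial_pmf k q) (\<lambda>s. (real (Suc s))^2) = measure_pmf.expectation (binomial_pmf k q) (\<lambda>s. (real s)^2 + 2 * real s + 1)"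
    by (simp add: power2_eq_square algebra_simps)
  also have "\<dots> = measure_pmf.expectation (binomial_pmf k q) (\<lambda>s. (real s)^2) + 2 * measure_pmf.expectation (binomial_pmf k q) (\<lambda>s. real s) + 1"
    using q by (simp add: Bochner_Integration.integral_add)
  finally have A: "measure_pmf.expectation (binomial_pmf k q) (\<lambda>s. (real (Suc s))^2) = k * q * (1-q) + (k*q)^2 + 2 * (k*q) + 1"
    using Suc binom_E1[OF q, of k] by simp
  show ?case unfolding binom_exp_Suc[OF q, of k "\<lambda>s. (real s)^2"] A Suc.IH by (simp add: algebra_simps power2_eq_square)
qed

lemma binom_cheb:
  assumes q: "q \<in> {0..1}" and d: "d > 0"
  shows "measure_pmf.prob (binomial_pmf k q) {s. \<bar>real s - k*q\<bar> \<ge> d} \<le> k*q*(1-q) / d^2"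
proof -
  have "measure_pmf.prob (binomial_pmf k q) {s \<in> space (measure_pmf (binomial_pmf k q)). \<bar>real s - measure_pmf.expectation (binomial_pmf k q) real\<bar> \<ge> d}
    \<le> measure_pmf.variance (binomial_pmf k q) real / d^2"
    by (rule measure_pmf.Chebyshev_inequality) (use q d in auto)
  moreover have "measure_pmf.variance (binomial_pmf k q) real = k*q*(1-q)"
  proof -
    have "measure_pmf.variance (binomial_pmf k q) real = measure_pmf.expectation (binomial_pmf k q) (\<lambda>s. (real s)^2 - 2*(k*q) * real s + (k*q)^2)"
      using binom_E1[OF q, of k] by (simp add: power2_diff algebra_simps)
    also have "\<dots> = measure_pmf.expectation (binomial_pmf k q) (\<lambda>s. (real s)^2) - 2*(k*q) * measure_pmf.expectation (binomial_pmf k q) real + (k*q)^2"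
      using q by (simp add: Bochner_Integration.integral_add Bochner_Integration.integral_diff)
    finally show ?thesis using binom_E1[OF q, of k] binom_E2[OF q, of k] by (simp add: power2_eq_square algebra_simps)
  qed
  ultimately show ?thesis using binom_E1[OF q, of k] by simp
qed


lemma map_pmf_bool_bernoulli: "map_pmf P q = bernoulli_pmf (measure_pmf.prob q {x. P x})"
proof (rule pmf_eqI)
  fix b :: bool
  have c: "measure_pmf.prob q {x. \<not> P x} = 1 - measure_pmf.prob q {x. P x}"
    using measure_pmf.prob_compl[of "{x. P x}" q] by (simp add: Compl_eq_Diff_UNIV[symmetric] Collect_neg_eq)
  show "pmf (map_pmf P q) b = pmf (bernoulli_pmf (measure_pmf.prob q {x. P x})) b"
    by (cases b) (auto simp: pmf_map vimage_def c)
qed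

lemma rep_count: "map_pmf (\<lambda>xs. length (filter P xs)) (replicate_pmf n q) = binomial_pmf n (measure_pmf.prob q {x. P x})"
proof (induction n)
  case 0 then show ?case by (simp add: binomial_pmf_0)
next
  case (Suc n)
  let ?p = "measure_pmf.prob q {x. P x}"
  have p: "?p \<in> {0..1}" by auto
  have "map_pmf (\<lambda>xs. length (filter P xs)) (replicate_pmf (Suc n) q) =
     q \<bind> (\<lambda>x. map_pmf (\<lambda>c. (if P x then 1 else 0) + c) (map_pmf (\<lambda>xs. length (filter P xs)) (replicate_pmf n q)))"
    by (auto simp add: map_pmf_def bind_assoc_pmf bind_return_pmf intro!: bind_pmf_cong)
  also have "\<dots> = q \<bind> (\<lambda>x. map_pmf (\<lambda>c. (if P x then 1 else 0) + c) (binomial_pmf n ?p))"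
    by (simp only: Suc.IH)
  also have "\<dots> = map_pmf P q \<bind> (\<lambda>b. map_pmf (\<lambda>c. (if b then 1 else 0) + c) (binomial_pmf n ?p))"
    by (simp add: bind_map_pmf)
  also have "\<dots> = binomial_pmf (Suc n) ?p"
    unfolding map_pmf_bool_bernoulli using p by (simp add: binomial_pmf_Suc map_pmf_def)
  finally show ?case .
qed

lemma rep_concat: "replicate_pmf (r*k) \<nu> = map_pmf concat (replicate_pmf r (replicate_pmf k \<nu>))"
proof (induction r)
  case 0 then show ?case by simp
next
  case (Suc r)
  have "replicate_pmf (Suc r * k) \<nu> = replicate_pmf (k + r*k) \<nu>" by simp
  also have "\<dots> = do {xs \<leftarrow> replicate_pmf k \<nu>; ys \<leftarrow> replicate_pmf (r*k) \<nu>; return_pmf (xs @ ys)}"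
    by (rule replicate_pmf_distrib)
  also have "\<dots> = map_pmf concat (replicate_pmf (Suc r) (replicate_pmf k \<nu>))"
    unfolding Suc.IH by (simp add: map_pmf_def bind_assoc_pmf bind_return_pmf)
  finally show ?case .
qed


definition grp :: "nat \<Rightarrow> nat list \<Rightarrow> nat \<Rightarrow> nat list" where
  "grp k xs g = take k (drop (g*k) xs)"
definition cg :: "nat \<Rightarrow> nat list \<Rightarrow> nat \<Rightarrow> nat \<Rightarrow> nat" where
  "cg k xs g s = length (filter (\<lambda>x. s \<le> x) (grp k xs g))"
definition ngood :: "nat \<Rightarrow> nat \<Rightarrow> nat \<Rightarrow> nat list \<Rightarrow> nat \<Rightarrow> nat" where
  "ngood k r j xs s = card {g. g < r \<and> j \<le> cg k xs g s}"
definition Sset :: "nat \<Rightarrow> nat \<Rightarrow> nat \<Rightarrow> nat \<Rightarrow> nat list \<Rightarrow> nat set" where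
  "Sset m k r j xs = {s. s \<le> m \<and> r < 2 * ngood k r j xs s}"
definition Phin :: "nat \<Rightarrow> nat \<Rightarrow> nat \<Rightarrow> nat \<Rightarrow> nat list \<Rightarrow> nat" where
  "Phin m k r j xs = (if Sset m k r j xs = {} then 0 else Max (Sset m k r j xs))"

lemma length_filter_mono': "(\<And>x. P x \<Longrightarrow> Q x) \<Longrightarrow> length (filter P xs) \<le> length (filter Q xs)"
  by (induction xs) auto

lemma Phin_le: "Phin m k r j xs \<le> m"
  unfolding Phin_def Sset_def by (auto intro: Max.boundedI)

lemma grp_concat: "(\<forall>G\<in>set Gs. length G = k) \<Longrightarrow> g < length Gs \<Longrightarrow> grp k (concat Gs) g = Gs ! g"
proof (induction Gs arbitrary: g)
  case Nil then show ?case by simp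
next
  case (Cons G Gs)
  show ?case
  proof (cases g)
    case 0 then show ?thesis using Cons by (simp add: grp_def)
  next
    case (Suc g')
    have "grp k (concat (G # Gs)) g = grp k (concat Gs) g'"
      using Cons.prems Suc by (simp add: grp_def add.commute)
    then show ?thesis using Cons Suc by simp
  qed
qed

lemma ngood_concat:
  assumes "\<forall>G\<in>set Gs. length G = k" "length Gs = r"
  shows "ngood k r j (concat Gs) s = length (filter (\<lambda>G. j \<le> length (filter (\<lambda>x. s \<le> x) G)) Gs)"
  unfolding ngood_def cg_def length_filter_conv_card using assms grp_concat[OF assms(1)]
  by (intro arg_cong[where f=card]) auto

lemma ngood_mono: "s1 \<le> s2 \<Longrightarrow> ngood k r j xs s2 \<le> ngood k r j xs s1"
  unfolding ngood_def
proof (intro card_mono)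
  assume "s1 \<le> s2"
  then have "cg k xs g s2 \<le> cg k xs g s1" for g
    unfolding cg_def by (intro length_filter_mono') auto
  then show "{g. g < r \<and> j \<le> cg k xs g s2} \<subseteq> {g. g < r \<and> j \<le> cg k xs g s1}"
    using le_trans by blast
qed auto

lemma Phin_good:
  assumes "s_lo \<le> m" "r < 2 * ngood k r j xs s_lo" "2 * ngood k r j xs s_hi < r"
  shows "s_lo \<le> Phin m k r j xs \<and> Phin m k r j xs < s_hi"
proof -
  have fin: "finite (Sset m k r j xs)" unfolding Sset_def by auto
  have lo: "s_lo \<in> Sset m k r j xs" using assms unfolding Sset_def by auto
  then have ne: "Sset m k r j xs \<noteq> {}" by auto
  have "s < s_hi" if "s \<in> Sset m k r j xs" for s
  proof (rule ccontr)
    assume "\<not> s < s_hi"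
    then have "ngood k r j xs s \<le> ngood k r j xs s_hi" by (intro ngood_mono) auto
    then show False using that assms(3) unfolding Sset_def by auto
  qed
  then show ?thesis using fin lo ne unfolding Phin_def by auto
qed

lemma hoeff_low:
  assumes "\<pi> \<ge> 7/8" "\<pi> \<le> 1" "r \<ge> 1"
  shows "measure_pmf.prob (binomial_pmf r \<pi>) {c. 2 * c \<le> r} \<le> exp (-9 * real r / 32)"
proof -
  interpret binomial_distribution r \<pi> by standard (use assms in auto)
  have "{c. 2 * c \<le> r} = {c. real c \<le> r * \<pi> - r * (\<pi> - 1/2)}" by (auto simp: algebra_simps)
  then have "measure_pmf.prob (binomial_pmf r \<pi>) {c. 2 * c \<le> r} \<le> exp (-2 * (r * (\<pi> - 1/2))\<^sup>2 / r)"
    using prob_le[of "r * (\<pi> - 1/2)"] assms by auto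
  also have "\<dots> \<le> exp (-9 * real r / 32)"
  proof -
    have "(\<pi> - 1/2)^2 \<ge> (3/8)^2" using assms by (intro power_mono) auto
    moreover have "2 * (r * (\<pi> - 1/2))\<^sup>2 / r = 2 * r * (\<pi> - 1/2)^2" using assms by (simp add: power_mult_distrib power2_eq_square)
    ultimately have "2 * (r * (\<pi> - 1/2))\<^sup>2 / r \<ge> 2 * r * (3/8)^2" by (simp add: mult_left_mono)
    then have "2 * (r * (\<pi> - 1/2))\<^sup>2 / r \<ge> 9 * real r / 32" by (simp add: power2_eq_square)
    then show ?thesis by simp
  qed
  finally show ?thesis .
qed

lemma hoeff_high:
  assumes "\<pi> \<le> 1/8" "\<pi> \<ge> 0" "r \<ge> 1"
  shows "measure_pmf.prob (binomial_pmf r \<pi>) {c. r \<le> 2 * c} \<le> exp (-9 * real r / 32)"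
proof -
  interpret binomial_distribution r \<pi> by standard (use assms in auto)
  have "{c. r \<le> 2 * c} = {c. real c \<ge> r * \<pi> + r * (1/2 - \<pi>)}" by (auto simp: algebra_simps)
  then have "measure_pmf.prob (binomial_pmf r \<pi>) {c. r \<le> 2 * c} \<le> exp (-2 * (r * (1/2 - \<pi>))\<^sup>2 / r)"
    using prob_ge[of "r * (1/2 - \<pi>)"] assms by auto
  also have "\<dots> \<le> exp (-9 * real r / 32)"
  proof -
    have "(1/2 - \<pi>)^2 \<ge> (3/8)^2" using assms by (intro power_mono) auto
    moreover have "2 * (r * (1/2 - \<pi>))\<^sup>2 / r = 2 * r * (1/2 - \<pi>)^2" using assms by (simp add: power_mult_distrib power2_eq_square)
    ultimately have "2 * (r * (1/2 - \<pi>))\<^sup>2 / r \<ge> 2 * r * (3/8)^2" by (simp add: mult_left_mono)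
    then have "2 * (r * (1/2 - \<pi>))\<^sup>2 / r \<ge> 9 * real r / 32" by (simp add: power2_eq_square)
    then show ?thesis by simp
  qed
  finally show ?thesis .
qed


lemma prob_eq_on_support:
  assumes "\<And>x. x \<in> set_pmf p \<Longrightarrow> x \<in> A \<longleftrightarrow> x \<in> B"
  shows "measure_pmf.prob p A = measure_pmf.prob p B"
proof -
  have "A \<inter> set_pmf p = B \<inter> set_pmf p" using assms by auto
  then show ?thesis by (metis measure_Int_set_pmf)
qed

lemma group_prob:
  "measure_pmf.prob (replicate_pmf (r*k) \<nu>) {xs. Q (ngood k r j xs s)} =
   measure_pmf.prob (binomial_pmf r (measure_pmf.prob (binomial_pmf k (measure_pmf.prob \<nu> {x. s \<le> x})) {c. j \<le> c})) {c. Q c}"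
proof -
  let ?Good = "\<lambda>G. j \<le> length (filter (\<lambda>x. s \<le> x) G)"
  have pi: "measure_pmf.prob (replicate_pmf k \<nu>) {G. ?Good G} = measure_pmf.prob (binomial_pmf k (measure_pmf.prob \<nu> {x. s \<le> x})) {c. j \<le> c}"
    by (simp add: rep_count[symmetric] vimage_def)
  have "measure_pmf.prob (replicate_pmf (r*k) \<nu>) {xs. Q (ngood k r j xs s)} =
     measure_pmf.prob (replicate_pmf r (replicate_pmf k \<nu>)) {Gs. Q (ngood k r j (concat Gs) s)}"
    by (simp add: rep_concat vimage_def)
  also have "\<dots> = measure_pmf.prob (replicate_pmf r (replicate_pmf k \<nu>)) {Gs. Q (length (filter ?Good Gs))}"
    by (rule prob_eq_on_support) (auto simp: set_replicate_pmf ngood_concat)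
  also have "\<dots> = measure_pmf.prob (map_pmf (\<lambda>Gs. length (filter ?Good Gs)) (replicate_pmf r (replicate_pmf k \<nu>))) {c. Q c}"
    by (simp add: vimage_def)
  also have "\<dots> = measure_pmf.prob (binomial_pmf r (measure_pmf.prob (binomial_pmf k (measure_pmf.prob \<nu> {x. s \<le> x})) {c. j \<le> c})) {c. Q c}"
    by (simp only: rep_count pi)
  finally show ?thesis .
qed

lemma main_pmf:
  fixes \<nu> :: "nat pmf"
  assumes slo: "s_lo \<le> m" and r: "r \<ge> 1"
    and lo: "measure_pmf.prob (binomial_pmf k (measure_pmf.prob \<nu> {x. s_lo \<le> x})) {c. j \<le> c} \<ge> 7/8"
    and hi: "measure_pmf.prob (binomial_pmf k (measure_pmf.prob \<nu> {x. s_hi \<le> x})) {c. j \<le> c} \<le> 1/8"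
  shows "measure_pmf.prob (replicate_pmf (r*k) \<nu>) {xs. s_lo \<le> Phin m k r j xs \<and> Phin m k r j xs < s_hi}
     \<ge> 1 - 2 * exp (-9 * real r / 32)"
proof -
  let ?P = "replicate_pmf (r*k) \<nu>"
  let ?A = "{xs. 2 * ngood k r j xs s_lo \<le> r}"
  let ?B = "{xs. r \<le> 2 * ngood k r j xs s_hi}"
  have A: "measure_pmf.prob ?P ?A \<le> exp (-9 * real r / 32)"
    using group_prob[of r k \<nu> "\<lambda>c. 2 * c \<le> r" j s_lo] hoeff_low[OF lo _ r] by simp
  have B: "measure_pmf.prob ?P ?B \<le> exp (-9 * real r / 32)"
    using group_prob[of r k \<nu> "\<lambda>c. r \<le> 2 * c" j s_hi] hoeff_high[OF hi _ r] by simp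
  have sub: "UNIV - {xs. s_lo \<le> Phin m k r j xs \<and> Phin m k r j xs < s_hi} \<subseteq> ?A \<union> ?B"
  proof
    fix xs assume xs: "xs \<in> UNIV - {xs. s_lo \<le> Phin m k r j xs \<and> Phin m k r j xs < s_hi}"
    show "xs \<in> ?A \<union> ?B"
    proof (rule ccontr)
      assume "xs \<notin> ?A \<union> ?B"
      then have "r < 2 * ngood k r j xs s_lo" "2 * ngood k r j xs s_hi < r" by auto
      from Phin_good[OF slo this] show False using xs by auto
    qed
  qed
  have "1 - measure_pmf.prob ?P {xs. s_lo \<le> Phin m k r j xs \<and> Phin m k r j xs < s_hi}
     = measure_pmf.prob ?P (UNIV - {xs. s_lo \<le> Phin m k r j xs \<and> Phin m k r j xs < s_hi})"
    using measure_pmf.prob_compl[of "{xs. s_lo \<le> Phin m k r j xs \<and> Phin m k r j xs < s_hi}" ?P] by simp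
  also have "\<dots> \<le> measure_pmf.prob ?P (?A \<union> ?B)"
    by (rule measure_pmf.finite_measure_mono[OF sub]) auto
  also have "\<dots> \<le> measure_pmf.prob ?P ?A + measure_pmf.prob ?P ?B"
    by (rule measure_subadditive) auto
  finally show ?thesis using A B by linarith
qed


definition cl :: "real \<Rightarrow> real" where "cl x = max 0 (min 1 x)"

lemma cl_01: "cl x \<in> {0..1}" unfolding cl_def by auto

lemma bern_cl: "bernoulli_pmf x = bernoulli_pmf (cl x)"
proof (rule pmf_eqI)
  fix b show "pmf (bernoulli_pmf x) b = pmf (bernoulli_pmf (cl x)) b"
    unfolding cl_def bernoulli_pmf.rep_eq by (simp add: min_def max_def)
qed

fun Tl :: "(nat \<Rightarrow> real) \<Rightarrow> nat list \<Rightarrow> history pmf" where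
  "Tl p [] = return_pmf []"
| "Tl p (i # is) = bernoulli_pmf (p i) \<bind> (\<lambda>b. map_pmf (\<lambda>t. (i, b) # t) (Tl p is))"

definition schF :: "nat \<Rightarrow> nat \<Rightarrow> nat \<Rightarrow> nat list" where
  "schF m a n = concat (map (\<lambda>i. replicate m i) [a..<a+n])"

definition cnt :: "history \<Rightarrow> nat \<Rightarrow> nat" where
  "cnt h i = length (filter (\<lambda>x. x = (i, True)) h)"

definition cvecF :: "nat \<Rightarrow> nat \<Rightarrow> history \<Rightarrow> nat list" where
  "cvecF a n h = map (cnt h) [a..<a+n]"

primrec PlF :: "(nat \<Rightarrow> nat pmf) \<Rightarrow> nat \<Rightarrow> nat \<Rightarrow> nat list pmf" where
  "PlF \<beta> a 0 = return_pmf []"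
| "PlF \<beta> a (Suc n) = \<beta> a \<bind> (\<lambda>c. map_pmf (\<lambda>ys. c # ys) (PlF \<beta> (Suc a) n))"

lemma schF_Suc: "schF m a (Suc n) = replicate m a @ schF m (Suc a) n"
  unfolding schF_def by (simp add: upt_conv_Cons)

lemma length_schF: "length (schF m a n) = n * m"
  by (induction n arbitrary: a) (simp_all add: schF_Suc schF_def)

lemma set_schF: "set (schF m a n) \<subseteq> {a..<a+n}"
  unfolding schF_def by auto

lemma Tl_append: "Tl p (xs @ ys) = Tl p xs \<bind> (\<lambda>u. map_pmf (\<lambda>v. u @ v) (Tl p ys))"
  by (induction xs) (simp_all add: map_pmf_def bind_assoc_pmf bind_return_pmf bind_return_pmf')

lemma Tl_set: "t \<in> set_pmf (Tl p L) \<Longrightarrow> map fst t = L"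
  by (induction L arbitrary: t) auto

lemma cnt_Cons: "cnt ((i', b) # u) i = (if i' = i \<and> b then 1 else 0) + cnt u i"
  unfolding cnt_def by auto

lemma cnt_append: "cnt (u @ v) i = cnt u i + cnt v i"
  unfolding cnt_def by simp

lemma cnt_zero: "i \<notin> set (map fst u) \<Longrightarrow> cnt u i = 0"
  unfolding cnt_def by (induction u) auto

lemma Tl_rep_cnt: "map_pmf (\<lambda>u. cnt u a) (Tl p (replicate m a)) = binomial_pmf m (cl (p a))"
proof (induction m)
  case 0 then show ?case using cl_01 by (simp add: binomial_pmf_0 cnt_def)
next
  case (Suc m)
  have "map_pmf (\<lambda>u. cnt u a) (Tl p (replicate (Suc m) a)) =
    bernoulli_pmf (cl (p a)) \<bind> (\<lambda>b. map_pmf (\<lambda>c. (if b then 1 else 0) + c) (map_pmf (\<lambda>u. cnt u a) (Tl p (replicate m a))))"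
    by (simp add: map_pmf_def bind_assoc_pmf bind_return_pmf cnt_Cons bern_cl[of "p a"])
  also have "\<dots> = binomial_pmf (Suc m) (cl (p a))"
    unfolding Suc.IH using cl_01 by (simp add: binomial_pmf_Suc map_pmf_def)
  finally show ?case .
qed

lemma Tl_cvec: "map_pmf (cvecF a n) (Tl p (schF m a n)) = PlF (\<lambda>i. binomial_pmf m (cl (p i))) a n"
proof (induction n arbitrary: a)
  case 0 then show ?case by (simp add: schF_def cvecF_def)
next
  case (Suc n)
  have eq: "cvecF a (Suc n) (u @ v) = cnt u a # cvecF (Suc a) n v"
    if u: "u \<in> set_pmf (Tl p (replicate m a))" and v: "v \<in> set_pmf (Tl p (schF m (Suc a) n))" for u v
  proof -
    have fu: "map fst u = replicate m a" using Tl_set[OF u] .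
    have fv: "map fst v = schF m (Suc a) n" using Tl_set[OF v] .
    have "cnt v a = 0" using fv set_schF[of m "Suc a" n] by (intro cnt_zero) auto
    moreover have cu: "cnt u i = 0" if "i \<in> {Suc a..<Suc a + n}" for i
      using fu that by (intro cnt_zero) (auto simp: set_replicate_conv_if)
    then have "map (cnt (u @ v)) [Suc a..<Suc a + n] = map (cnt v) [Suc a..<Suc a + n]"
      by (intro map_cong refl) (auto simp: cnt_append)
    moreover have "[a..<a+Suc n] = a # [Suc a..<Suc a + n]"
    proof -
      have "[a..<a+Suc n] = a # [Suc a..<a+Suc n]" by (rule upt_conv_Cons) simp
      moreover have "a + Suc n = Suc a + n" by simp
      ultimately show ?thesis by metis
    qed
    ultimately show ?thesis unfolding cvecF_def by (simp del: upt_Suc add: cnt_append)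
  qed
  have "map_pmf (cvecF a (Suc n)) (Tl p (schF m a (Suc n))) =
     Tl p (replicate m a) \<bind> (\<lambda>u. map_pmf (\<lambda>v. cvecF a (Suc n) (u @ v)) (Tl p (schF m (Suc a) n)))"
    by (simp add: schF_Suc Tl_append map_bind_pmf pmf.map_comp o_def)
  also have "\<dots> = Tl p (replicate m a) \<bind> (\<lambda>u. map_pmf (\<lambda>v. cnt u a # cvecF (Suc a) n v) (Tl p (schF m (Suc a) n)))"
    by (intro bind_pmf_cong refl map_pmf_cong) (auto simp: eq)
  also have "\<dots> = map_pmf (\<lambda>u. cnt u a) (Tl p (replicate m a)) \<bind> (\<lambda>c. map_pmf (\<lambda>ys. c # ys) (map_pmf (cvecF (Suc a) n) (Tl p (schF m (Suc a) n))))"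
    by (simp add: bind_map_pmf pmf.map_comp o_def)
  also have "\<dots> = PlF (\<lambda>i. binomial_pmf m (cl (p i))) a (Suc n)"
    unfolding Suc.IH Tl_rep_cnt by simp
  finally show ?case .
qed

definition outv :: "nat \<Rightarrow> nat \<Rightarrow> nat \<Rightarrow> nat \<Rightarrow> history \<Rightarrow> real" where
  "outv m k r j h = real (Phin m k r j (cvecF 0 (r*k) h)) / real m"

definition algo :: "nat \<Rightarrow> nat \<Rightarrow> nat \<Rightarrow> nat \<Rightarrow> bandit_alg" where
  "algo m k r j h = (if length h < length (schF m 0 (r*k)) then return_pmf (Inl (schF m 0 (r*k) ! length h))
      else return_pmf (Inr (outv m k r j h)))"

lemma alg_output_algo:
  "length h \<le> length (schF m 0 (r*k)) \<Longrightarrow> length (schF m 0 (r*k)) - length h \<le> n \<Longrightarrow>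
   alg_output (algo m k r j) p n h = map_pmf (\<lambda>t. outv m k r j (h @ t)) (Tl p (drop (length h) (schF m 0 (r*k))))"
proof (induction n arbitrary: h)
  case 0
  then have "length h = length (schF m 0 (r*k))" by simp
  then show ?case by (simp add: algo_def)
next
  case (Suc n)
  let ?L = "schF m 0 (r*k)"
  show ?case
  proof (cases "length h < length ?L")
    case False
    then have "length h = length ?L" using Suc.prems by simp
    then show ?thesis by (simp add: algo_def bind_return_pmf)
  next
    case True
    have d: "drop (length h) ?L = ?L ! length h # drop (Suc (length h)) ?L"
      using True by (simp add: Cons_nth_drop_Suc)
    have "alg_output (algo m k r j) p (Suc n) h = bernoulli_pmf (p (?L ! length h)) \<bind>
       (\<lambda>b. alg_output (algo m k r j) p n (h @ [(?L ! length h, b)]))"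
      using True by (simp add: algo_def bind_return_pmf)
    also have "\<dots> = bernoulli_pmf (p (?L ! length h)) \<bind>
       (\<lambda>b. map_pmf (\<lambda>t. outv m k r j ((h @ [(?L ! length h, b)]) @ t)) (Tl p (drop (Suc (length h)) ?L)))"
      using True Suc.prems by (intro bind_pmf_cong refl, subst Suc.IH) auto
    also have "\<dots> = map_pmf (\<lambda>t. outv m k r j (h @ t)) (Tl p (drop (length h) ?L))"
      unfolding d by (simp add: map_bind_pmf pmf.map_comp o_def)
    finally show ?thesis .
  qed
qed


lemma PiM_prod:
  fixes \<mu> :: "real measure" and f :: "nat \<Rightarrow> real \<Rightarrow> ennreal"
  assumes mu: "prob_space \<mu>" and f: "\<And>i. i < n \<Longrightarrow> f i \<in> borel_measurable \<mu>"
  shows "(\<integral>\<^sup>+ p. (\<Prod>i<n. f i (p i)) \<partial>PiM UNIV (\<lambda>_. \<mu>)) = (\<Prod>i<n. \<integral>\<^sup>+ x. f i x \<partial>\<mu>)"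
proof -
  interpret product_prob_space "\<lambda>_. \<mu>" UNIV
    by (simp add: product_prob_space_def product_prob_space_axioms_def product_sigma_finite_def
        mu prob_space_imp_sigma_finite)
  have meas: "(\<lambda>y. \<Prod>i\<in>{..<n}. f i (y i)) \<in> borel_measurable (PiM {..<n} (\<lambda>_. \<mu>))"
    using f by (intro borel_measurable_prod_ennreal measurable_compose[OF measurable_component_singleton]) auto
  have "(\<integral>\<^sup>+ y. (\<Prod>i\<in>{..<n}. f i (y i)) \<partial>PiM {..<n} (\<lambda>_. \<mu>)) = (\<Prod>i<n. \<integral>\<^sup>+ x. f i x \<partial>\<mu>)"
    using f by (subst product_nn_integral_prod) auto
  moreover have "(\<integral>\<^sup>+ y. (\<Prod>i\<in>{..<n}. f i (y i)) \<partial>PiM {..<n} (\<lambda>_. \<mu>)) =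
      (\<integral>\<^sup>+ p. (\<Prod>i\<in>{..<n}. f i (restrict p {..<n} i)) \<partial>PiM UNIV (\<lambda>_. \<mu>))"
  proof -
    have d: "distr (PiM UNIV (\<lambda>_. \<mu>)) (PiM {..<n} (\<lambda>_. \<mu>)) (\<lambda>x. restrict x {..<n}) = PiM {..<n} (\<lambda>_. \<mu>)"
      by (rule distr_PiM_restrict_finite) auto
    have "(\<integral>\<^sup>+ y. (\<Prod>i\<in>{..<n}. f i (y i)) \<partial>PiM {..<n} (\<lambda>_. \<mu>)) =
       (\<integral>\<^sup>+ y. (\<Prod>i\<in>{..<n}. f i (y i)) \<partial>distr (PiM UNIV (\<lambda>_. \<mu>)) (PiM {..<n} (\<lambda>_. \<mu>)) (\<lambda>x. restrict x {..<n}))"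
      by (simp only: d)
    also have "\<dots> = (\<integral>\<^sup>+ p. (\<Prod>i\<in>{..<n}. f i (restrict p {..<n} i)) \<partial>PiM UNIV (\<lambda>_. \<mu>))"
      by (rule nn_integral_distr) (auto intro: measurable_restrict_subset simp: d meas)
    finally show ?thesis .
  qed
  moreover have "(\<lambda>p. \<Prod>i\<in>{..<n}. f i (restrict p {..<n} i)) = (\<lambda>p. \<Prod>i<n. f i (p i))"
    by (auto intro!: prod.cong)
  ultimately show ?thesis by simp
qed

lemma PlF_set: "(\<And>i. set_pmf (\<beta> i) \<subseteq> {..m}) \<Longrightarrow> xs \<in> set_pmf (PlF \<beta> a n) \<Longrightarrow> length xs = n \<and> set xs \<subseteq> {..m}"
  apply (induction n arbitrary: a xs)
   apply simp
  apply auto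
   apply (meson atMost_iff subsetD)
  apply (meson atMost_iff subsetD)
  done

lemma pmf_bind_Cons: "pmf (q \<bind> (\<lambda>x. map_pmf (\<lambda>ys. x # ys) P)) (c # ys) = pmf q c * pmf P ys"
proof -
  have e: "pmf (map_pmf (\<lambda>ys. x # ys) P) (c # ys) = (if x = c then pmf P ys else 0)" for x
  proof (cases "x = c")
    case True then show ?thesis by (simp add: pmf_map_inj' inj_on_def)
  next
    case False
    then have "c # ys \<notin> set_pmf (map_pmf (\<lambda>ys. x # ys) P)" by auto
    then show ?thesis using False by (metis pmf_eq_0_set_pmf)
  qed
  have "pmf (q \<bind> (\<lambda>x. map_pmf (\<lambda>ys. x # ys) P)) (c # ys) = (\<integral>x. (if x = c then pmf P ys else 0) \<partial>q)"
    by (simp add: pmf_bind e)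
  also have "\<dots> = (\<integral>x. pmf P ys * indicator {c} x \<partial>q)"
    by (intro Bochner_Integration.integral_cong) (auto simp: indicator_def)
  also have "\<dots> = pmf q c * pmf P ys"
    by (simp add: measure_pmf_single)
  finally show ?thesis .
qed

lemma PlF_pmf: "pmf (PlF \<beta> a n) xs = (if length xs = n then (\<Prod>i<n. pmf (\<beta> (a+i)) (xs!i)) else 0)"
proof (induction n arbitrary: a xs)
  case 0 then show ?case by (auto simp: pmf_return)
next
  case (Suc n)
  show ?case
  proof (cases xs)
    case Nil
    have "[] \<notin> set_pmf (PlF \<beta> a (Suc n))" by auto
    then show ?thesis using Nil by (metis pmf_eq_0_set_pmf list.size(3) nat.simps(3))
  next
    case (Cons c ys)
    have "pmf (PlF \<beta> a (Suc n)) xs = pmf (\<beta> a) c * pmf (PlF \<beta> (Suc a) n) ys"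
      using Cons by (simp add: pmf_bind_Cons)
    also have "\<dots> = (if length xs = Suc n then (\<Prod>i<Suc n. pmf (\<beta> (a+i)) (xs!i)) else 0)"
      using Cons Suc.IH by (simp del: prod.lessThan_Suc add: prod.lessThan_Suc_shift)
    finally show ?thesis .
  qed
qed

lemma PlF_const: "PlF (\<lambda>_. \<nu>) a n = replicate_pmf n \<nu>"
  by (induction n arbitrary: a) (simp_all add: map_pmf_def)

lemma PlF_prob:
  assumes "\<And>i. set_pmf (\<beta> i) \<subseteq> {..m}"
  shows "measure_pmf.prob (PlF \<beta> 0 n) E = (\<Sum>xs\<in>E \<inter> {xs. set xs \<subseteq> {..m} \<and> length xs = n}. \<Prod>i<n. pmf (\<beta> i) (xs!i))"
proof -
  let ?L = "{xs. set xs \<subseteq> {..m} \<and> length xs = n}"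
  have fin: "finite ?L" by (rule finite_lists_length_eq) auto
  have "measure_pmf.prob (PlF \<beta> 0 n) E = measure_pmf.prob (PlF \<beta> 0 n) (E \<inter> ?L)"
    by (rule prob_eq_on_support) (use PlF_set[OF assms] in auto)
  also have "\<dots> = (\<Sum>xs\<in>E \<inter> ?L. pmf (PlF \<beta> 0 n) xs)"
    using fin by (intro measure_measure_pmf_finite) auto
  also have "\<dots> = (\<Sum>xs\<in>E \<inter> ?L. \<Prod>i<n. pmf (\<beta> i) (xs!i))"
    by (intro sum.cong refl) (auto simp: PlF_pmf)
  finally show ?thesis .
qed


definition fb :: "nat \<Rightarrow> nat \<Rightarrow> real \<Rightarrow> real" where
  "fb m s x = pmf (binomial_pmf m (cl x)) s"

lemma fb_eq: "fb m s x = real (m choose s) * cl x ^ s * (1 - cl x) ^ (m - s)"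
  unfolding fb_def using cl_01[of x] by simp

lemma fb_nonneg: "0 \<le> fb m s x" unfolding fb_def by simp

lemma fb_meas_borel: "(\<lambda>x. ennreal (fb m s x)) \<in> borel_measurable borel"
  unfolding fb_eq cl_def by measurable

lemma fb_meas: "sets \<mu> = sets borel \<Longrightarrow> (\<lambda>x. ennreal (fb m s x)) \<in> borel_measurable \<mu>"
  using fb_meas_borel measurable_cong_sets by blast

lemma binom_cl_set: "set_pmf (binomial_pmf m (cl x)) \<subseteq> {..m}"
  using cl_01[of x] by (auto simp: set_pmf_binomial_eq)

definition w :: "real measure \<Rightarrow> nat \<Rightarrow> nat \<Rightarrow> ennreal" where
  "w \<mu> m s = (\<integral>\<^sup>+ x. ennreal (fb m s x) \<partial>\<mu>)"

definition nu :: "real measure \<Rightarrow> nat \<Rightarrow> nat pmf" where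
  "nu \<mu> m = embed_pmf (\<lambda>s. enn2real (w \<mu> m s))"

lemma w_zero: "m < s \<Longrightarrow> w \<mu> m s = 0"
  unfolding w_def fb_eq by (simp add: binomial_eq_0)

lemma sum_w:
  assumes mu: "prob_space \<mu>" and sets: "sets \<mu> = sets borel"
  shows "(\<Sum>s\<le>m. w \<mu> m s) = 1"
proof -
  have "(\<Sum>s\<le>m. w \<mu> m s) = (\<integral>\<^sup>+ x. (\<Sum>s\<le>m. ennreal (fb m s x)) \<partial>\<mu>)"
    unfolding w_def by (rule nn_integral_sum[symmetric]) (rule fb_meas[OF sets])
  also have "\<dots> = (\<integral>\<^sup>+ x. 1 \<partial>\<mu>)"
  proof (intro nn_integral_cong)
    fix x
    have "(\<Sum>s\<le>m. fb m s x) = 1" unfolding fb_def by (rule sum_pmf_eq_1) (use binom_cl_set in auto)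
    then show "(\<Sum>s\<le>m. ennreal (fb m s x)) = 1" by (simp add: fb_nonneg)
  qed
  also have "\<dots> = 1" using mu by (simp add: prob_space.emeasure_space_1)
  finally show ?thesis .
qed

lemma w_le1:
  assumes mu: "prob_space \<mu>" and sets: "sets \<mu> = sets borel"
  shows "w \<mu> m s \<le> 1"
proof (cases "s \<le> m")
  case True
  have "w \<mu> m s \<le> (\<Sum>s\<le>m. w \<mu> m s)" using True by (intro member_le_sum) auto
  then show ?thesis using sum_w[OF mu sets] by simp
qed (simp add: w_zero)

lemma ennreal_pmf_nu:
  assumes mu: "prob_space \<mu>" and sets: "sets \<mu> = sets borel"
  shows "ennreal (pmf (nu \<mu> m) s) = w \<mu> m s"
proof -
  have fin: "w \<mu> m s' < top" for s' using w_le1[OF mu sets, of m s'] by (simp add: order_le_less_trans)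
  have "(\<integral>\<^sup>+s. ennreal (enn2real (w \<mu> m s)) \<partial>count_space UNIV) = (\<Sum>s\<le>m. ennreal (enn2real (w \<mu> m s)))"
    by (rule nn_integral_count_space') (auto simp: w_zero)
  also have "\<dots> = 1" using fin sum_w[OF mu sets] by simp
  finally have p: "(\<integral>\<^sup>+s. ennreal (enn2real (w \<mu> m s)) \<partial>count_space UNIV) = 1" .
  have "pmf (nu \<mu> m) s = enn2real (w \<mu> m s)"
    unfolding nu_def by (rule pmf_embed_pmf) (use p in auto)
  then show ?thesis using fin by simp
qed

lemma set_nu:
  assumes mu: "prob_space \<mu>" and sets: "sets \<mu> = sets borel"
  shows "set_pmf (nu \<mu> m) \<subseteq> {..m}"
proof
  fix s assume "s \<in> set_pmf (nu \<mu> m)"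
  then have "pmf (nu \<mu> m) s \<noteq> 0" by (simp add: set_pmf_iff)
  moreover have "w \<mu> m s = ennreal (pmf (nu \<mu> m) s)" by (simp add: ennreal_pmf_nu[OF mu sets])
  ultimately have "w \<mu> m s \<noteq> 0" using pmf_nonneg[of "nu \<mu> m" s] by simp
  then show "s \<in> {..m}" using w_zero[of m s \<mu>] by (metis atMost_iff not_le)
qed

lemma prob_sum_support:
  fixes q :: "nat pmf"
  assumes "set_pmf q \<subseteq> {..m}"
  shows "measure_pmf.prob q T = (\<Sum>s\<in>T \<inter> {..m}. pmf q s)"
proof -
  have "measure_pmf.prob q T = measure_pmf.prob q (T \<inter> {..m})"
    by (rule prob_eq_on_support) (use assms in auto)
  also have "\<dots> = (\<Sum>s\<in>T \<inter> {..m}. pmf q s)" by (intro measure_measure_pmf_finite finite_Int disjI2 finite_atMost)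
  finally show ?thesis .
qed

lemma prob_nu:
  assumes mu: "prob_space \<mu>" and sets: "sets \<mu> = sets borel"
  shows "ennreal (measure_pmf.prob (nu \<mu> m) T) = (\<integral>\<^sup>+ x. ennreal (measure_pmf.prob (binomial_pmf m (cl x)) T) \<partial>\<mu>)"
proof -
  have "ennreal (measure_pmf.prob (nu \<mu> m) T) = (\<Sum>s\<in>T \<inter> {..m}. ennreal (pmf (nu \<mu> m) s))"
    by (simp add: prob_sum_support[OF set_nu[OF mu sets]])
  also have "\<dots> = (\<Sum>s\<in>T \<inter> {..m}. w \<mu> m s)" by (simp add: ennreal_pmf_nu[OF mu sets])
  also have "\<dots> = (\<integral>\<^sup>+ x. (\<Sum>s\<in>T \<inter> {..m}. ennreal (fb m s x)) \<partial>\<mu>)"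
    unfolding w_def by (rule nn_integral_sum[symmetric]) (rule fb_meas[OF sets])
  also have "\<dots> = (\<integral>\<^sup>+ x. ennreal (measure_pmf.prob (binomial_pmf m (cl x)) T) \<partial>\<mu>)"
    by (intro nn_integral_cong) (simp add: prob_sum_support[OF binom_cl_set] fb_def)
  finally show ?thesis .
qed

lemma integral_main:
  assumes mu: "prob_space \<mu>" and sets: "sets \<mu> = sets borel"
  shows "(\<integral>\<^sup>+ p. ennreal (measure_pmf.prob (PlF (\<lambda>i. binomial_pmf m (cl (p i))) 0 n) E) \<partial>PiM UNIV (\<lambda>_. \<mu>))
     = ennreal (measure_pmf.prob (replicate_pmf n (nu \<mu> m)) E)"
proof -
  let ?F = "E \<inter> {xs. set xs \<subseteq> {..m} \<and> length xs = n}"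
  have "(\<integral>\<^sup>+ p. ennreal (measure_pmf.prob (PlF (\<lambda>i. binomial_pmf m (cl (p i))) 0 n) E) \<partial>PiM UNIV (\<lambda>_. \<mu>))
     = (\<integral>\<^sup>+ p. (\<Sum>xs\<in>?F. \<Prod>i<n. ennreal (fb m (xs!i) (p i))) \<partial>PiM UNIV (\<lambda>_. \<mu>))"
    by (intro nn_integral_cong)
       (simp add: PlF_prob[OF binom_cl_set] fb_def prod_ennreal sum_nonneg prod_nonneg)
  also have "\<dots> = (\<Sum>xs\<in>?F. \<integral>\<^sup>+ p. (\<Prod>i<n. ennreal (fb m (xs!i) (p i))) \<partial>PiM UNIV (\<lambda>_. \<mu>))"
  proof (rule nn_integral_sum)
    fix xs
    show "(\<lambda>p. \<Prod>i<n. ennreal (fb m (xs!i) (p i))) \<in> borel_measurable (PiM UNIV (\<lambda>_. \<mu>))"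
      using fb_meas[OF sets]
      by (intro borel_measurable_prod_ennreal measurable_compose[OF measurable_component_singleton]) auto
  qed
  also have "\<dots> = (\<Sum>xs\<in>?F. \<Prod>i<n. w \<mu> m (xs!i))"
    unfolding w_def by (intro sum.cong refl PiM_prod[OF mu] fb_meas[OF sets])
  also have "\<dots> = (\<Sum>xs\<in>?F. \<Prod>i<n. ennreal (pmf (nu \<mu> m) (xs!i)))"
    by (simp add: ennreal_pmf_nu[OF mu sets])
  also have "\<dots> = ennreal (measure_pmf.prob (replicate_pmf n (nu \<mu> m)) E)"
    unfolding PlF_const[symmetric, where \<nu>="nu \<mu> m" and a=0 and n=n] PlF_prob[OF set_nu[OF mu sets]]
    by (simp add: prod_ennreal sum_nonneg prod_nonneg)
  finally show ?thesis .
qed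


lemma ln2_ge: "ln (2::real) \<ge> 1/2"
proof -
  have "exp (1/2::real) * exp (1/2) = exp 1" by (simp add: exp_add[symmetric])
  then have "exp (1/2::real) * exp (1/2) \<le> 3" using exp_le by simp
  have "exp (1/2::real) \<le> 2"
  proof (rule ccontr)
    assume "\<not> exp (1/2::real) \<le> 2"
    then have "2 < exp (1/2::real)" by simp
    then have "2*2 < exp (1/2::real) * exp (1/2)" by (intro mult_strict_mono) auto
    then show False using \<open>exp (1/2::real) * exp (1/2) \<le> 3\<close> by simp
  qed
  then show ?thesis by (subst ln_ge_iff) auto
qed

lemma cheb_lo:
  fixes q e1 e2 :: real and k j :: nat
  assumes q: "q \<in> {0..1}" and e: "0 < e2" "e2 \<le> e1" "e1 \<le> 1"
    and qlo: "q \<ge> e1 - e2/8" and k: "real k \<ge> 128 * e1 / e2^2"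
    and j: "real j - 1 < k * (e1 - e2/2)"
  shows "measure_pmf.prob (binomial_pmf k q) {c. j \<le> c} \<ge> 7/8"
proof -
  define d where "d = k * (q - e1 + e2/2)"
  have kpos: "real k > 0"
  proof -
    have "128 * e1 / e2^2 > 0" using e by simp
    then show ?thesis using k by linarith
  qed
  have d0: "d > 0" unfolding d_def using kpos qlo e by (intro mult_pos_pos) auto
  have key: "8 * q \<le> k * (q - e1 + e2/2)^2"
  proof (cases "q \<le> 2 * e1")
    case True
    have "(3*e2/8)^2 \<le> (q - e1 + e2/2)^2" using qlo e by (intro power_mono) auto
    then have "k * (3*e2/8)^2 \<le> k * (q - e1 + e2/2)^2" by (simp add: mult_left_mono)
    moreover have "k * (3*e2/8)^2 \<ge> 128 * e1 / e2^2 * (3*e2/8)^2"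
      using k by (intro mult_right_mono) auto
    moreover have "128 * e1 / e2^2 * (3*e2/8)^2 = 18 * e1" using e by (simp add: field_simps power2_eq_square)
    ultimately show ?thesis using True q by auto
  next
    case False
    have "(q/2)^2 \<le> (q - e1 + e2/2)^2" using False e q by (intro power_mono) auto
    then have "k * (q/2)^2 \<le> k * (q - e1 + e2/2)^2" by (simp add: mult_left_mono)
    moreover have "k * (q/2)^2 \<ge> 128 * e1 / e2^2 * (q/2)^2"
      using k by (intro mult_right_mono) auto
    moreover have "128 * e1 / e2^2 \<ge> 128 / e1"
    proof -
      have "e2^2 \<le> e1^2" using e by (intro power_mono) auto
      then have "e1 / e2^2 \<ge> e1 / e1^2" using e by (intro divide_left_mono) auto
      then show ?thesis using e by (simp add: power2_eq_square)
    qed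
    moreover have "128 / e1 * (q/2)^2 \<ge> 8 * q"
    proof -
      have eq: "128 / e1 * (q/2)^2 = 32 * q * (q / e1)" by (simp add: power2_eq_square)
      have "q / e1 \<ge> 2" using False e by (simp add: field_simps)
      then have "32 * q * (q / e1) \<ge> 32 * q * 2" using q by (intro mult_left_mono) auto
      moreover have "q \<ge> 0" using q by simp
      ultimately show ?thesis using eq by linarith
    qed
    moreover have "128 * e1 / e2^2 * (q/2)^2 \<ge> 128 / e1 * (q/2)^2"
      using \<open>128 * e1 / e2^2 \<ge> 128 / e1\<close> by (intro mult_right_mono) auto
    ultimately show ?thesis by linarith
  qed
  have sub: "{c. \<not> j \<le> c} \<subseteq> {c. \<bar>real c - k*q\<bar> \<ge> d}"
  proof
    fix c assume "c \<in> {c. \<not> j \<le> c}"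
    then have "real c \<le> real j - 1" by auto
    then have "k*q - real c \<ge> d" using j unfolding d_def by (simp add: algebra_simps)
    then show "c \<in> {c. \<bar>real c - k*q\<bar> \<ge> d}" by auto
  qed
  have "measure_pmf.prob (binomial_pmf k q) {c. \<not> j \<le> c} \<le> measure_pmf.prob (binomial_pmf k q) {c. \<bar>real c - k*q\<bar> \<ge> d}"
    by (rule measure_pmf.finite_measure_mono[OF sub]) auto
  also have "\<dots> \<le> k*q*(1-q) / d^2" by (rule binom_cheb[OF q d0])
  also have "\<dots> \<le> k*q / d^2" using q kpos by (intro divide_right_mono) (auto simp: mult_left_le)
  also have "\<dots> \<le> 1/8"
  proof -
    have "d^2 = k * (k * (q - e1 + e2/2)^2)" unfolding d_def by (simp add: power2_eq_square)
    moreover have "k * (8 * q) \<le> k * (k * (q - e1 + e2/2)^2)" using key kpos by (intro mult_left_mono) auto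
    ultimately have "8 * (k*q) \<le> d^2" by (simp add: algebra_simps)
    then show ?thesis using d0 by (simp add: field_simps)
  qed
  finally have "measure_pmf.prob (binomial_pmf k q) {c. \<not> j \<le> c} \<le> 1/8" .
  moreover have "measure_pmf.prob (binomial_pmf k q) {c. \<not> j \<le> c} = 1 - measure_pmf.prob (binomial_pmf k q) {c. j \<le> c}"
    using measure_pmf.prob_compl[of "{c. j \<le> c}" "binomial_pmf k q"] by (simp add: Compl_eq_Diff_UNIV[symmetric] Collect_neg_eq)
  ultimately show ?thesis by simp
qed

lemma cheb_hi:
  fixes q e1 e2 :: real and k j :: nat
  assumes q: "q \<in> {0..1}" and e: "0 < e2" "e2 \<le> e1" "e1 \<le> 1"
    and qhi: "q \<le> e1 - 7*e2/8" and k: "real k \<ge> 128 * e1 / e2^2"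
    and j: "real j \<ge> k * (e1 - e2/2)"
  shows "measure_pmf.prob (binomial_pmf k q) {c. j \<le> c} \<le> 1/8"
proof -
  define d where "d = k * (3*e2/8)"
  have kpos: "real k > 0"
  proof -
    have "128 * e1 / e2^2 > 0" using e by simp
    then show ?thesis using k by linarith
  qed
  have d0: "d > 0" unfolding d_def using kpos e by auto
  have sub: "{c. j \<le> c} \<subseteq> {c. \<bar>real c - k*q\<bar> \<ge> d}"
  proof
    fix c assume "c \<in> {c. j \<le> c}"
    then have "real c \<ge> real j" by auto
    moreover have "k * (e1 - e2/2) - k*q \<ge> d"
    proof -
      have "e1 - e2/2 - q \<ge> 3*e2/8" using qhi by linarith
      then have "k * (e1 - e2/2 - q) \<ge> k * (3*e2/8)" using kpos by (intro mult_left_mono) auto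
      then show ?thesis unfolding d_def by (simp add: algebra_simps)
    qed
    ultimately show "c \<in> {c. \<bar>real c - k*q\<bar> \<ge> d}" using j by auto
  qed
  have "measure_pmf.prob (binomial_pmf k q) {c. j \<le> c} \<le> measure_pmf.prob (binomial_pmf k q) {c. \<bar>real c - k*q\<bar> \<ge> d}"
    by (rule measure_pmf.finite_measure_mono[OF sub]) auto
  also have "\<dots> \<le> k*q*(1-q) / d^2" by (rule binom_cheb[OF q d0])
  also have "\<dots> \<le> k*e1 / d^2"
  proof -
    have "q*(1-q) \<le> q*1" using q by (intro mult_left_mono) auto
    then have "q*(1-q) \<le> e1" using q qhi e by simp
    then have "k*q*(1-q) \<le> k*e1" using kpos by (simp add: mult.assoc mult_left_mono)
    then show ?thesis by (intro divide_right_mono) auto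
  qed
  also have "\<dots> \<le> 1/8"
  proof -
    have "d^2 = k * (k * (9*e2^2/64))" unfolding d_def by (simp add: power2_eq_square)
    moreover have "k * (9*e2^2/64) \<ge> 128 * e1 / e2^2 * (9*e2^2/64)" using k e by (intro mult_right_mono) auto
    moreover have "128 * e1 / e2^2 * (9*e2^2/64) = 18 * e1" using e by (simp add: field_simps)
    ultimately have "k * (k * (9*e2^2/64)) \<ge> k * (18 * e1)" using kpos by (intro mult_left_mono) auto
    then have "d^2 \<ge> 18 * (k * e1)" using \<open>d^2 = _\<close> by (simp add: algebra_simps)
    moreover have "k * e1 \<ge> 0" using kpos e by simp
    ultimately have "8 * (k * e1) \<le> d^2" by linarith
    then show ?thesis using d0 by (simp add: field_simps)
  qed
  finally show ?thesis .
qed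

lemma arm_lo:
  fixes p eps eta :: real and m s :: nat
  assumes p: "p \<in> {0..1}" and m: "m > 0" and eps: "eps \<ge> 0"
    and c: "\<And>c. c < s \<Longrightarrow> real c < m * (p - eps/6)"
    and ex: "exp (- real m * eps^2 / 18) \<le> eta"
  shows "measure_pmf.prob (binomial_pmf m p) {c. s \<le> c} \<ge> 1 - eta"
proof -
  interpret binomial_distribution m p by standard (use p in auto)
  have sub: "{c. \<not> s \<le> c} \<subseteq> {c. real c \<le> m * p - m * eps / 6}"
  proof
    fix c assume "c \<in> {c. \<not> s \<le> c}"
    then have "c < s" by auto
    from \<open>c < s \<Longrightarrow> _\<close>[OF this] show "c \<in> {c. real c \<le> m * p - m * eps / 6}" by (simp add: algebra_simps)
  qed
  have "measure_pmf.prob (binomial_pmf m p) {c. \<not> s \<le> c} \<le> measure_pmf.prob (binomial_pmf m p) {c. real c \<le> m * p - m * eps / 6}"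
    by (rule measure_pmf.finite_measure_mono[OF sub]) auto
  also have "\<dots> \<le> exp (-2 * (m * eps / 6)^2 / m)" by (rule prob_le) (use m eps in auto)
  also have "-2 * (m * eps / 6)^2 / m = - real m * eps^2 / 18" using m by (simp add: power2_eq_square field_simps)
  finally have "measure_pmf.prob (binomial_pmf m p) {c. \<not> s \<le> c} \<le> eta" using ex by simp
  moreover have "measure_pmf.prob (binomial_pmf m p) {c. \<not> s \<le> c} = 1 - measure_pmf.prob (binomial_pmf m p) {c. s \<le> c}"
    using measure_pmf.prob_compl[of "{c. s \<le> c}" "binomial_pmf m p"] by (simp add: Compl_eq_Diff_UNIV[symmetric] Collect_neg_eq)
  ultimately show ?thesis by simp
qed

lemma arm_hi:
  fixes p eps eta :: real and m s :: nat
  assumes p: "p \<in> {0..1}" and m: "m > 0" and eps: "eps \<ge> 0"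
    and c: "\<And>c. s \<le> c \<Longrightarrow> real c > m * (p + eps/6)"
    and ex: "exp (- real m * eps^2 / 18) \<le> eta"
  shows "measure_pmf.prob (binomial_pmf m p) {c. s \<le> c} \<le> eta"
proof -
  interpret binomial_distribution m p by standard (use p in auto)
  have sub: "{c. s \<le> c} \<subseteq> {c. real c \<ge> m * p + m * eps / 6}"
    using c by (force simp: algebra_simps)
  have "measure_pmf.prob (binomial_pmf m p) {c. s \<le> c} \<le> measure_pmf.prob (binomial_pmf m p) {c. real c \<ge> m * p + m * eps / 6}"
    by (rule measure_pmf.finite_measure_mono[OF sub]) auto
  also have "\<dots> \<le> exp (-2 * (m * eps / 6)^2 / m)" by (rule prob_ge) (use m eps in auto)
  also have "-2 * (m * eps / 6)^2 / m = - real m * eps^2 / 18" using m by (simp add: power2_eq_square field_simps)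
  finally show ?thesis using ex by simp
qed


lemma res_basic:
  assumes "reservoir \<mu>"
  shows "prob_space \<mu>" "sets \<mu> = sets borel" "space \<mu> = UNIV" "measure \<mu> {0..1} = 1"
proof -
  show ps: "prob_space \<mu>" and s: "sets \<mu> = sets borel" using assms unfolding reservoir_def by auto
  show "space \<mu> = UNIV" using sets_eq_imp_space_eq[OF s] by simp
  show "measure \<mu> {0..1} = 1" using assms unfolding reservoir_def by (simp add: measure_def)
qed

lemma G_mono:
  assumes R: "reservoir \<mu>" and xy: "x \<le> y"
  shows "G \<mu> x \<le> G \<mu> y"
proof -
  interpret prob_space \<mu> using res_basic[OF R] by simp
  have s: "sets \<mu> = sets borel" using res_basic[OF R] by simp
  show ?thesis unfolding G_def using s xy by (intro finite_measure_mono) auto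
qed

lemma G_neg: "x < 0 \<Longrightarrow> G \<mu> x = 0"
  unfolding G_def by simp

lemma G_one: "reservoir \<mu> \<Longrightarrow> G \<mu> 1 = 1"
  unfolding G_def by (simp add: res_basic)

lemma Ginv_props:
  assumes R: "reservoir \<mu>" and q: "0 < q" "q \<le> 1"
  shows "0 \<le> G_inv \<mu> q" "G_inv \<mu> q \<le> 1" "\<And>t. t < G_inv \<mu> q \<Longrightarrow> G \<mu> t < q"
    "\<And>t. t > G_inv \<mu> q \<Longrightarrow> G \<mu> t \<ge> q"
proof -
  let ?S = "{\<tau>. G \<mu> \<tau> \<ge> q}"
  have one: "1 \<in> ?S" using G_one[OF R] q by simp
  have nn: "\<And>x. x \<in> ?S \<Longrightarrow> 0 \<le> x"
  proof (rule ccontr)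
    fix x assume "x \<in> ?S" "\<not> 0 \<le> x"
    then show False using G_neg[of x \<mu>] q by simp
  qed
  have bdd: "bdd_below ?S" by (rule bdd_belowI[where m=0]) (use nn in blast)
  show "0 \<le> G_inv \<mu> q" unfolding G_inv_def using one nn by (intro cInf_greatest) auto
  show "G_inv \<mu> q \<le> 1" unfolding G_inv_def using one bdd by (intro cInf_lower) auto
  show "G \<mu> t < q" if "t < G_inv \<mu> q" for t
  proof (rule ccontr)
    assume "\<not> G \<mu> t < q"
    then have "t \<in> ?S" by simp
    then have "G_inv \<mu> q \<le> t" unfolding G_inv_def using bdd by (intro cInf_lower) auto
    then show False using that by simp
  qed
  show "G \<mu> t \<ge> q" if "t > G_inv \<mu> q" for t
  proof -
    have "Inf ?S < t" using that unfolding G_inv_def .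
    then obtain x where "x \<in> ?S" "x < t" using cInf_less_iff[of ?S t] one bdd by auto
    then show ?thesis using G_mono[OF R, of x t] by simp
  qed
qed

lemma meas_gt:
  assumes R: "reservoir \<mu>"
  shows "measure \<mu> {t<..} = 1 - measure \<mu> {..t}"
proof -
  interpret prob_space \<mu> using res_basic[OF R] by simp
  have "{t<..} = space \<mu> - {..t}" using res_basic[OF R] by auto
  then show ?thesis using prob_compl[of "{..t}"] res_basic[OF R] by simp
qed

lemma meas_le_G:
  assumes R: "reservoir \<mu>"
  shows "measure \<mu> {..t} \<le> G \<mu> t"
proof -
  interpret prob_space \<mu> using res_basic[OF R] by simp
  have s: "sets \<mu> = sets borel" using res_basic[OF R] by simp
  have z: "measure \<mu> (UNIV - {0..1}) = 0"
  proof -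
    have "UNIV - {0..1::real} = space \<mu> - {0..1}" using res_basic[OF R] by simp
    then show ?thesis using prob_compl[of "{0..1}"] res_basic[OF R] s by simp
  qed
  have "measure \<mu> {..t} \<le> measure \<mu> ({0..t} \<union> (UNIV - {0..1}))"
    using s by (intro finite_measure_mono) auto
  also have "\<dots> \<le> measure \<mu> {0..t} + measure \<mu> (UNIV - {0..1})"
    using s by (intro measure_subadditive) auto
  finally show ?thesis using z unfolding G_def by simp
qed

lemma G_le_meas:
  assumes R: "reservoir \<mu>"
  shows "G \<mu> t \<le> measure \<mu> {..t}"
proof -
  interpret prob_space \<mu> using res_basic[OF R] by simp
  have s: "sets \<mu> = sets borel" using res_basic[OF R] by simp
  show ?thesis unfolding G_def using s by (intro finite_measure_mono) auto
qed

lemma q1_bound: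
  assumes R: "reservoir \<mu>" and eta: "0 \<le> eta" "eta \<le> 1"
    and arm: "\<And>x. \<tau> < x \<Longrightarrow> measure_pmf.prob (binomial_pmf m (cl x)) T \<ge> 1 - eta"
  shows "measure_pmf.prob (nu \<mu> m) T \<ge> (1 - eta) * measure \<mu> {\<tau><..}"
proof -
  interpret prob_space \<mu> using res_basic[OF R] by simp
  have s: "sets \<mu> = sets borel" using res_basic[OF R] by simp
  have "ennreal ((1 - eta) * measure \<mu> {\<tau><..}) = (\<integral>\<^sup>+ x. ennreal (1 - eta) * indicator {\<tau><..} x \<partial>\<mu>)"
    using s eta by (simp add: nn_integral_cmult_indicator emeasure_eq_measure ennreal_mult)
  also have "\<dots> \<le> (\<integral>\<^sup>+ x. ennreal (measure_pmf.prob (binomial_pmf m (cl x)) T) \<partial>\<mu>)"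
  proof (intro nn_integral_mono)
    fix x show "ennreal (1 - eta) * indicator {\<tau><..} x \<le> ennreal (measure_pmf.prob (binomial_pmf m (cl x)) T)"
      using arm[of x] by (cases "\<tau> < x") (auto simp: indicator_def)
  qed
  also have "\<dots> = ennreal (measure_pmf.prob (nu \<mu> m) T)"
    by (rule prob_nu[symmetric]) (use res_basic[OF R] in auto)
  finally show ?thesis by (simp add: ennreal_le_iff)
qed

lemma q2_bound:
  assumes R: "reservoir \<mu>" and eta: "0 \<le> eta"
    and arm: "\<And>x. x \<le> \<tau> \<Longrightarrow> measure_pmf.prob (binomial_pmf m (cl x)) T \<le> eta"
  shows "measure_pmf.prob (nu \<mu> m) T \<le> measure \<mu> {\<tau><..} + eta"
proof -
  interpret prob_space \<mu> using res_basic[OF R] by simp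
  have s: "sets \<mu> = sets borel" using res_basic[OF R] by simp
  have "ennreal (measure_pmf.prob (nu \<mu> m) T) = (\<integral>\<^sup>+ x. ennreal (measure_pmf.prob (binomial_pmf m (cl x)) T) \<partial>\<mu>)"
    by (rule prob_nu) (use res_basic[OF R] in auto)
  also have "\<dots> \<le> (\<integral>\<^sup>+ x. (indicator {\<tau><..} x + ennreal eta) \<partial>\<mu>)"
  proof (intro nn_integral_mono)
    fix x
    show "ennreal (measure_pmf.prob (binomial_pmf m (cl x)) T) \<le> indicator {\<tau><..} x + ennreal eta"
    proof (cases "\<tau> < x")
      case True
      have "ennreal (measure_pmf.prob (binomial_pmf m (cl x)) T) \<le> 1" by simp
      moreover have "(1::ennreal) \<le> 1 + ennreal eta" by simp
      ultimately have "ennreal (measure_pmf.prob (binomial_pmf m (cl x)) T) \<le> 1 + ennreal eta" by (rule order_trans)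
      then show ?thesis using True by (simp add: indicator_def)
    next
      case False
      then show ?thesis using arm[of x] by (simp add: indicator_def ennreal_leI)
    qed
  qed
  also have "\<dots> = emeasure \<mu> {\<tau><..} + ennreal eta"
    using s by (subst nn_integral_add) (auto simp: emeasure_space_1)
  also have "\<dots> = ennreal (measure \<mu> {\<tau><..} + eta)"
    using eta by (simp add: emeasure_eq_measure ennreal_plus)
  finally have "ennreal (measure_pmf.prob (nu \<mu> m) T) \<le> ennreal (measure \<mu> {\<tau><..} + eta)" .
  moreover have "0 \<le> measure \<mu> {\<tau><..} + eta" using eta by simp
  ultimately show ?thesis by (simp only: ennreal_le_iff)
qed


lemma success_eq:
  assumes R: "reservoir \<mu>" and n: "r*k*m \<le> n"
  shows "success_prob \<mu> (algo m k r j) n I =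
    ennreal (measure_pmf.prob (replicate_pmf (r*k) (nu \<mu> m)) {xs. real (Phin m k r j xs) / real m \<in> I})"
proof -
  have "success_prob \<mu> (algo m k r j) n I =
     (\<integral>\<^sup>+ p. ennreal (measure_pmf.prob (PlF (\<lambda>i. binomial_pmf m (cl (p i))) 0 (r*k)) {xs. real (Phin m k r j xs) / real m \<in> I}) \<partial>PiM UNIV (\<lambda>_. \<mu>))"
    unfolding success_prob_def
  proof (intro nn_integral_cong)
    fix p :: "nat \<Rightarrow> real"
    have "alg_output (algo m k r j) p n [] = map_pmf (outv m k r j) (Tl p (schF m 0 (r*k)))"
      using alg_output_algo[where h="[]" and n=n and m=m and r=r and k=k and j=j and p=p] n
      by (simp add: length_schF mult.commute mult.left_commute)
    then have "measure_pmf.prob (alg_output (algo m k r j) p n []) I =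
        measure_pmf.prob (map_pmf (cvecF 0 (r*k)) (Tl p (schF m 0 (r*k)))) {xs. real (Phin m k r j xs) / real m \<in> I}"
      by (simp add: outv_def vimage_def)
    also have "\<dots> = measure_pmf.prob (PlF (\<lambda>i. binomial_pmf m (cl (p i))) 0 (r*k)) {xs. real (Phin m k r j xs) / real m \<in> I}"
      by (simp only: Tl_cvec)
    finally show "ennreal (measure_pmf.prob (alg_output (algo m k r j) p n []) I) =
        ennreal (measure_pmf.prob (PlF (\<lambda>i. binomial_pmf m (cl (p i))) 0 (r*k)) {xs. real (Phin m k r j xs) / real m \<in> I})"
      by simp
  qed
  also have "\<dots> = ennreal (measure_pmf.prob (replicate_pmf (r*k) (nu \<mu> m)) {xs. real (Phin m k r j xs) / real m \<in> I})"
    by (rule integral_main) (use res_basic[OF R] in auto)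
  finally show ?thesis .
qed

lemma valid_algo:
  assumes "real (r*k*m) \<le> B" "m > 0"
  shows "valid_alg B (algo m k r j)"
  unfolding valid_alg_def
proof (intro conjI allI impI)
  fix h i assume "Inl i \<in> set_pmf (algo m k r j h)"
  then have "length h < length (schF m 0 (r*k))" unfolding algo_def by (auto split: if_splits)
  then have "length h + 1 \<le> r*k*m" by (simp add: length_schF)
  then have "real (length h) + 1 \<le> real (r*k*m)" by linarith
  then show "real (length h) + 1 \<le> B" using assms by linarith
next
  fix h a assume "Inr a \<in> set_pmf (algo m k r j h)"
  then have a: "a = outv m k r j h" unfolding algo_def by (auto split: if_splits)
  have "Phin m k r j (cvecF 0 (r*k) h) \<le> m" by (rule Phin_le)
  then show "a \<in> {0..1}" unfolding a outv_def using assms by (auto simp: field_simps)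
qed


lemma params:
  fixes e1 e2 eps dl :: real
  assumes h: "0 < e1" "e1 \<le> 1/2" "0 < e2" "e2 \<le> 1/2" "0 < eps" "eps \<le> 1/2" "0 < dl" "dl \<le> 1/2" "e2 \<le> e1"
  defines "m \<equiv> nat \<lceil>18 * ln (8/e2) / eps^2\<rceil>"
    and "k \<equiv> nat \<lceil>128 * e1 / e2^2\<rceil>"
    and "r \<equiv> nat \<lceil>32/9 * ln (4/dl)\<rceil>"
  shows "m > 0" "exp (- real m * eps^2 / 18) \<le> e2/8" "real k \<ge> 128 * e1 / e2^2"
    "r \<ge> 1" "exp (-9 * real r / 32) \<le> dl/4"
    "real (r*k*m) \<le> 200000 * (e1 * ln (1/e2) * ln (1/dl)) / (e2^2 * eps^2)"
proof -
  have l2: "ln 2 \<ge> (1/2::real)" by (rule ln2_ge)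
  have L2: "ln (1/e2) \<ge> ln 2" using h by (subst ln_le_cancel_iff) (auto simp: field_simps)
  have Ld: "ln (1/dl) \<ge> ln 2" using h by (subst ln_le_cancel_iff) (auto simp: field_simps)
  have ln8: "ln (8/e2) = 3 * ln 2 + ln (1/e2)"
  proof -
    have "ln (8/e2) = ln (8 * (1/e2))" by simp
    also have "\<dots> = ln 8 + ln (1/e2)" using h by (intro ln_mult_pos) auto
    finally have "ln (8/e2) = ln 8 + ln (1/e2)" .
    moreover have "ln (8::real) = 3 * ln 2" using ln_realpow[of 2 3] by simp
    ultimately show ?thesis by simp
  qed
  have ln4: "ln (4/dl) = 2 * ln 2 + ln (1/dl)"
  proof -
    have "ln (4/dl) = ln (4 * (1/dl))" by simp
    also have "\<dots> = ln 4 + ln (1/dl)" using h by (intro ln_mult_pos) auto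
    finally have "ln (4/dl) = ln 4 + ln (1/dl)" .
    moreover have "ln (4::real) = 2 * ln 2" using ln_realpow[of 2 2] by simp
    ultimately show ?thesis by simp
  qed
  have e2sq: "eps^2 > 0" using h by simp
  have xm: "18 * ln (8/e2) / eps^2 > 0" using ln8 L2 l2 e2sq by (intro divide_pos_pos) auto
  have m_ge: "real m \<ge> 18 * ln (8/e2) / eps^2" unfolding m_def by linarith
  have m_le: "real m \<le> 18 * ln (8/e2) / eps^2 + 1" unfolding m_def using xm by linarith
  show "m > 0" using m_ge xm by linarith
  have "- real m * eps^2 / 18 \<le> - ln (8/e2)"
  proof -
    have "real m * eps^2 \<ge> 18 * ln (8/e2)" using m_ge e2sq by (simp add: field_simps)
    then show ?thesis by simp
  qed
  then have "exp (- real m * eps^2 / 18) \<le> exp (- ln (8/e2))" by simp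
  also have "\<dots> = e2/8" using h by (simp add: exp_minus)
  finally show "exp (- real m * eps^2 / 18) \<le> e2/8" .
  have xk: "128 * e1 / e2^2 > 0" using h by simp
  show k_ge: "real k \<ge> 128 * e1 / e2^2" unfolding k_def by linarith
  have k_le: "real k \<le> 128 * e1 / e2^2 + 1" unfolding k_def using xk by linarith
  have xr: "32/9 * ln (4/dl) > 0" using ln4 Ld l2 by auto
  have r_ge: "real r \<ge> 32/9 * ln (4/dl)" unfolding r_def by linarith
  have r_le: "real r \<le> 32/9 * ln (4/dl) + 1" unfolding r_def using xr by linarith
  show "r \<ge> 1" using r_ge xr by linarith
  have "-9 * real r / 32 \<le> - ln (4/dl)" using r_ge by simp
  then have "exp (-9 * real r / 32) \<le> exp (- ln (4/dl))" by simp
  also have "\<dots> = dl/4" using h by (simp add: exp_minus)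
  finally show "exp (-9 * real r / 32) \<le> dl/4" .
  define L where "L = ln (1/e2)"
  define D where "D = ln (1/dl)"
  have mb: "real m \<le> 73 * L / eps^2"
  proof -
    have "18 * ln (8/e2) \<le> 72 * L" unfolding L_def using ln8 L2 by linarith
    then have "18 * ln (8/e2) / eps^2 \<le> 72 * L / eps^2" using e2sq by (intro divide_right_mono) auto
    moreover have "1 \<le> L / eps^2"
    proof -
      have "eps^2 \<le> (1/2)^2" using h by (intro power_mono) auto
      moreover have "((1::real)/2)^2 = 1/4" by (simp add: power2_eq_square)
      ultimately have "eps^2 \<le> L" unfolding L_def using L2 l2 by linarith
      then show ?thesis using e2sq by simp
    qed
    moreover have "73 * L / eps^2 = 72 * L / eps^2 + L / eps^2" by (simp add: add_divide_distrib[symmetric])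
    ultimately show ?thesis using m_le by linarith
  qed
  have kb: "real k \<le> 129 * e1 / e2^2"
  proof -
    have "e2^2 \<le> e2 * 1" using h by (simp add: power2_eq_square mult_left_mono)
    then have "e2^2 \<le> e1" using h by simp
    then have "1 \<le> e1 / e2^2" using h by simp
    then show ?thesis using k_le by simp
  qed
  have rb: "real r \<le> 13 * D"
    using r_le ln4 Ld l2 unfolding D_def by linarith
  have "real (r*k*m) = real r * real k * real m" by simp
  also have "\<dots> \<le> (13 * D) * (129 * e1 / e2^2) * (73 * L / eps^2)"
  proof -
    have D0: "D \<ge> 0" unfolding D_def using Ld l2 by linarith
    have "0 \<le> 13 * D * (129 * e1 / e2^2)" using D0 h by simp
    then show ?thesis using rb kb mb D0 by (intro mult_mono) auto
  qed
  also have "\<dots> = 122421 * (e1 * L * D) / (e2^2 * eps^2)" by (simp add: field_simps)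
  also have "\<dots> \<le> 200000 * (e1 * L * D) / (e2^2 * eps^2)"
  proof -
    have "0 \<le> (e1 * L * D) / (e2^2 * eps^2)" unfolding L_def D_def using h L2 Ld l2 by simp
    then show ?thesis by (simp only: times_divide_eq_right[symmetric]) (rule mult_right_mono, auto)
  qed
  finally show "real (r*k*m) \<le> 200000 * (e1 * ln (1/e2) * ln (1/dl)) / (e2^2 * eps^2)"
    unfolding L_def D_def .
qed


lemma cl_gt: "t < 1 \<Longrightarrow> t < x \<Longrightarrow> t < cl x" unfolding cl_def by auto
lemma cl_le: "0 \<le> t \<Longrightarrow> x \<le> t \<Longrightarrow> cl x \<le> t" unfolding cl_def by auto

lemma per_mu:
  fixes e1 e2 eps dl :: real and m k r j :: nat
  assumes h: "0 < e1" "e1 \<le> 1/2" "0 < e2" "e2 \<le> 1/2" "0 < eps" "eps \<le> 1/2" "0 < dl" "dl \<le> 1/2" "e2 \<le> e1"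
    and R: "reservoir \<mu>"
    and m: "m > 0" "exp (- real m * eps^2 / 18) \<le> e2/8"
    and k: "real k \<ge> 128 * e1 / e2^2"
    and r: "r \<ge> 1" "exp (-9 * real r / 32) \<le> dl/4"
    and j1: "real j \<ge> k * (e1 - e2/2)" and j2: "real j - 1 < k * (e1 - e2/2)"
    and n: "r*k*m \<le> n"
  shows "success_prob \<mu> (algo m k r j) n {G_inv \<mu> (1 - e1) - eps/3 .. G_inv \<mu> (1 - e1 + e2) + eps/3}
     \<ge> ennreal (1 - dl/2)"
proof -
  define a where "a = G_inv \<mu> (1 - e1)"
  define b where "b = G_inv \<mu> (1 - e1 + e2)"
  have a: "0 \<le> a" "a \<le> 1" "\<And>t. t < a \<Longrightarrow> G \<mu> t < 1 - e1"
    using Ginv_props[OF R, of "1 - e1"] h unfolding a_def by auto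
  have b: "0 \<le> b" "b \<le> 1" "\<And>t. t > b \<Longrightarrow> G \<mu> t \<ge> 1 - e1 + e2"
    using Ginv_props[OF R, of "1 - e1 + e2"] h unfolding b_def by auto
  define slo where "slo = nat \<lceil>real m * (a - eps/3)\<rceil>"
  define shi where "shi = nat \<lfloor>real m * (b + eps/3)\<rfloor> + 1"
  define I where "I = {a - eps/3 .. b + eps/3}"
  have slo_m: "slo \<le> m"
  proof -
    have "real m * (a - eps/3) \<le> real m * 1" using a h by (intro mult_left_mono) auto
    then show ?thesis unfolding slo_def by (simp add: nat_le_iff ceiling_le_iff)
  qed
  have q1: "measure_pmf.prob (nu \<mu> m) {c. slo \<le> c} \<ge> e1 - e2/8"
  proof -
    have "measure_pmf.prob (nu \<mu> m) {c. slo \<le> c} \<ge> (1 - e2/8) * measure \<mu> {a - eps/6<..}"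
    proof (rule q1_bound[OF R])
      fix x assume x: "a - eps/6 < x"
      have p: "cl x > a - eps/6" using cl_gt[OF _ x] a h by auto
      show "measure_pmf.prob (binomial_pmf m (cl x)) {c. slo \<le> c} \<ge> 1 - e2/8"
      proof (rule arm_lo[OF cl_01 m(1) _ _ m(2)])
        fix c assume "c < slo"
        then have "int c < \<lceil>real m * (a - eps/3)\<rceil>" unfolding slo_def by linarith
        then have "real c < real m * (a - eps/3)" by (simp add: less_ceiling_iff)
        also have "\<dots> \<le> real m * (cl x - eps/6)" using p by (intro mult_left_mono) auto
        finally show "real c < real m * (cl x - eps/6)" .
      qed (use h in auto)
    qed (use h in auto)
    moreover have "measure \<mu> {a - eps/6<..} \<ge> e1"
      using meas_gt[OF R, of "a - eps/6"] meas_le_G[OF R, of "a - eps/6"] a(3)[of "a - eps/6"] h by auto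
    moreover have "(1 - e2/8) * e1 \<ge> e1 - e2/8"
    proof -
      have "e2/8 * e1 \<le> e2/8 * 1" using h by (intro mult_left_mono) auto
      then show ?thesis by (simp add: algebra_simps)
    qed
    moreover have "(1 - e2/8) * measure \<mu> {a - eps/6<..} \<ge> (1 - e2/8) * e1"
      using calculation(2) h by (intro mult_left_mono) auto
    ultimately show ?thesis by linarith
  qed
  have q2: "measure_pmf.prob (nu \<mu> m) {c. shi \<le> c} \<le> e1 - 7*e2/8"
  proof -
    have "measure_pmf.prob (nu \<mu> m) {c. shi \<le> c} \<le> measure \<mu> {b + eps/6<..} + e2/8"
    proof (rule q2_bound[OF R])
      fix x assume x: "x \<le> b + eps/6"
      have p: "cl x \<le> b + eps/6" using cl_le[OF _ x] b h by auto
      show "measure_pmf.prob (binomial_pmf m (cl x)) {c. shi \<le> c} \<le> e2/8"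
      proof (rule arm_hi[OF cl_01 m(1) _ _ m(2)])
        fix c assume "shi \<le> c"
        then have "int c \<ge> \<lfloor>real m * (b + eps/3)\<rfloor> + 1" unfolding shi_def by linarith
        then have "real c > real m * (b + eps/3)" by linarith
        moreover have "real m * (cl x + eps/6) \<le> real m * (b + eps/3)" using p h by (intro mult_left_mono) auto
        ultimately show "real c > real m * (cl x + eps/6)" by linarith
      qed (use h in auto)
    qed (use h in auto)
    moreover have "measure \<mu> {b + eps/6<..} \<le> e1 - e2"
      using meas_gt[OF R, of "b + eps/6"] G_le_meas[OF R, of "b + eps/6"] b(3)[of "b + eps/6"] h by auto
    ultimately show ?thesis by linarith
  qed
  have lo: "measure_pmf.prob (binomial_pmf k (measure_pmf.prob (nu \<mu> m) {x. slo \<le> x})) {c. j \<le> c} \<ge> 7/8"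
    by (rule cheb_lo[OF _ _ _ _ q1 k j2]) (use h in auto)
  have hi: "measure_pmf.prob (binomial_pmf k (measure_pmf.prob (nu \<mu> m) {x. shi \<le> x})) {c. j \<le> c} \<le> 1/8"
    by (rule cheb_hi[OF _ _ _ _ q2 k j1]) (use h in auto)
  have mp: "measure_pmf.prob (replicate_pmf (r*k) (nu \<mu> m)) {xs. slo \<le> Phin m k r j xs \<and> Phin m k r j xs < shi}
     \<ge> 1 - 2 * exp (-9 * real r / 32)"
    by (rule main_pmf[OF slo_m r(1) lo hi])
  have sub: "{xs. slo \<le> Phin m k r j xs \<and> Phin m k r j xs < shi} \<subseteq> {xs. real (Phin m k r j xs) / real m \<in> I}"
  proof
    fix xs assume "xs \<in> {xs. slo \<le> Phin m k r j xs \<and> Phin m k r j xs < shi}"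
    then have s1: "slo \<le> Phin m k r j xs" and s2: "Phin m k r j xs < shi" by auto
    have "real m * (a - eps/3) \<le> real slo" unfolding slo_def by linarith
    also have "\<dots> \<le> real (Phin m k r j xs)" using s1 by simp
    finally have l: "a - eps/3 \<le> real (Phin m k r j xs) / real m" using m(1) by (simp add: field_simps)
    have "Phin m k r j xs \<le> nat \<lfloor>real m * (b + eps/3)\<rfloor>" using s2 unfolding shi_def by simp
    moreover have "real m * (b + eps/3) \<ge> 0" using b h by simp
    ultimately have "real (Phin m k r j xs) \<le> real m * (b + eps/3)" by linarith
    then have u: "real (Phin m k r j xs) / real m \<le> b + eps/3" using m(1) by (simp add: field_simps)
    show "xs \<in> {xs. real (Phin m k r j xs) / real m \<in> I}" using l u unfolding I_def by simp
  qed
  have "1 - dl/2 \<le> 1 - 2 * exp (-9 * real r / 32)" using r(2) by simp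
  also have "\<dots> \<le> measure_pmf.prob (replicate_pmf (r*k) (nu \<mu> m)) {xs. real (Phin m k r j xs) / real m \<in> I}"
    using mp measure_pmf.finite_measure_mono[OF sub] by (smt (verit) sets_measure_pmf UNIV_I)
  finally have fin: "1 - dl/2 \<le> measure_pmf.prob (replicate_pmf (r*k) (nu \<mu> m)) {xs. real (Phin m k r j xs) / real m \<in> I}" .
  have "success_prob \<mu> (algo m k r j) n I = ennreal (measure_pmf.prob (replicate_pmf (r*k) (nu \<mu> m)) {xs. real (Phin m k r j xs) / real m \<in> I})"
    by (rule success_eq[OF R n])
  then show ?thesis using fin unfolding I_def a_def b_def by (simp add: ennreal_leI)
qed

theorem proposition1p4:
  "\<exists>C::real. C > 0 \<and>
     (\<forall>\<eta>1 \<eta>2 \<epsilon> \<delta> :: real.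
        \<eta>1 \<in> {0<..1/2} \<and> \<eta>2 \<in> {0<..1/2} \<and> \<epsilon> \<in> {0<..1/2} \<and> \<delta> \<in> {0<..1/2} \<and> \<eta>2 \<le> \<eta>1 \<longrightarrow>
        (let B = C * (\<eta>1 * ln (1 / \<eta>2) * ln (1 / \<delta>)) / (\<eta>2\<^sup>2 * \<epsilon>\<^sup>2) in
         \<exists>A. valid_alg B A \<and>
           (\<forall>\<mu>. reservoir \<mu> \<longrightarrow>
              success_prob \<mu> A (nat \<lceil>B\<rceil>)
                {G_inv \<mu> (1 - \<eta>1) - \<epsilon> / 3 .. G_inv \<mu> (1 - \<eta>1 + \<eta>2) + \<epsilon> / 3}
              \<ge> ennreal (1 - \<delta> / 2))))"
proof (intro exI[of _ "200000::real"] conjI allI impI)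
  show "(200000::real) > 0" by simp
  fix e1 e2 eps dl :: real
  assume H: "e1 \<in> {0<..1/2} \<and> e2 \<in> {0<..1/2} \<and> eps \<in> {0<..1/2} \<and> dl \<in> {0<..1/2} \<and> e2 \<le> e1"
  then have h: "0 < e1" "e1 \<le> 1/2" "0 < e2" "e2 \<le> 1/2" "0 < eps" "eps \<le> 1/2" "0 < dl" "dl \<le> 1/2" "e2 \<le> e1"
    by auto
  define B where "B = 200000 * (e1 * ln (1 / e2) * ln (1 / dl)) / (e2\<^sup>2 * eps\<^sup>2)"
  define m where "m = nat \<lceil>18 * ln (8/e2) / eps^2\<rceil>"
  define k where "k = nat \<lceil>128 * e1 / e2^2\<rceil>"
  define r where "r = nat \<lceil>32/9 * ln (4/dl)\<rceil>"
  define j where "j = nat \<lceil>real k * (e1 - e2/2)\<rceil>"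
  note P = params[OF h, folded m_def k_def r_def]
  have j1: "real j \<ge> k * (e1 - e2/2)" unfolding j_def by linarith
  have j2: "real j - 1 < k * (e1 - e2/2)"
  proof -
    have "k * (e1 - e2/2) \<ge> 0" using h by simp
    then show ?thesis unfolding j_def by linarith
  qed
  have rkmB: "real (r*k*m) \<le> B" using P(6) unfolding B_def .
  have n: "r*k*m \<le> nat \<lceil>B\<rceil>" using rkmB by linarith
  have "valid_alg B (algo m k r j) \<and>
     (\<forall>\<mu>. reservoir \<mu> \<longrightarrow> success_prob \<mu> (algo m k r j) (nat \<lceil>B\<rceil>)
        {G_inv \<mu> (1 - e1) - eps / 3 .. G_inv \<mu> (1 - e1 + e2) + eps / 3} \<ge> ennreal (1 - dl / 2))"
  proof (intro conjI allI impI)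
    show "valid_alg B (algo m k r j)" by (rule valid_algo[OF rkmB P(1)])
    fix \<mu> assume R: "reservoir \<mu>"
    show "success_prob \<mu> (algo m k r j) (nat \<lceil>B\<rceil>)
        {G_inv \<mu> (1 - e1) - eps / 3 .. G_inv \<mu> (1 - e1 + e2) + eps / 3} \<ge> ennreal (1 - dl / 2)"
      by (rule per_mu[OF h R P(1) P(2) P(3) P(4) P(5) j1 j2 n])
  qed
  then show "let B = 200000 * (e1 * ln (1 / e2) * ln (1 / dl)) / (e2\<^sup>2 * eps\<^sup>2) in
         \<exists>A. valid_alg B A \<and>
           (\<forall>\<mu>. reservoir \<mu> \<longrightarrow>
              success_prob \<mu> A (nat \<lceil>B\<rceil>)
                {G_inv \<mu> (1 - e1) - eps / 3 .. G_inv \<mu> (1 - e1 + e2) + eps / 3}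
              \<ge> ennreal (1 - dl / 2))"
    unfolding Let_def B_def[symmetric] by blast
qed


end
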